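(* Let $n\ge 2$ and $d\ge 1$, and let $\mathbf{T}=(T_{p-q})_{p,q=0}^{n-1}$ and $\mathbf{U}=(U_{p-q})_{p,q=0}^{n-1}$ be block Toeplitz matrices with $T_j,U_j\in\mathcal{M}_{d\times d}(\mathbb{C})$ for $|j|\le n-1$. Then the product $\mathbf{T}\mathbf{U}$ (as an $nd\times nd$ matrix) is a block Toeplitz matrix if and only if $$T_pU_{q-n}=T_{p-n}U_q\quad\text{for all } p,q\in\{1,2,\dots,n-1\}.$$
   Context: A block Toeplitz matrix $\mathbf{T}=(T_{p-q})_{p,q=0}^{n-1}$ is an $nd\times nd$ complex matrix partitioned into $n\times n$ blocks of size $d\times d$, whose $(p,q)$ block ($0\le p,q\le n-1$) equals $T_{p-q}$ for some matrices $T_{-(n-1)},\dots,T_{n-1}\in\mathcal{M}_{d\times d}(\mathbb{C})$. $\mathcal{M}_{d\times d}(\mathbb{C})$ denotes the algebra of complex $d\times d$ matrices. *)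

theory Defs
  imports "Jordan_Normal_Form.Matrix"
begin

definition block_toeplitz :: "nat \<Rightarrow> nat \<Rightarrow> (int \<Rightarrow> complex mat) \<Rightarrow> complex mat" where
  "block_toeplitz n d T =
     mat (n * d) (n * d)
       (\<lambda>(i, k). T (int (i div d) - int (k div d)) $$ (i mod d, k mod d))"

definition is_block_toeplitz :: "nat \<Rightarrow> nat \<Rightarrow> complex mat \<Rightarrow> bool" where
  "is_block_toeplitz n d M \<longleftrightarrow>
     M \<in> carrier_mat (n * d) (n * d) \<and>
     (\<exists>S. (\<forall>j. \<bar>j\<bar> \<le> int n - 1 \<longrightarrow> S j \<in> carrier_mat d d) \<and> M = block_toeplitz n d S)"

end

theory Submission
  imports Defs
begin

lemma sum_split_nd: "sum g {..<n*d} = (\<Sum>r<n. \<Sum>s<d. g (r*d+s::nat))"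
proof (induction n)
  case 0 then show ?case by simp
next
  case (Suc n)
  have "{..<Suc n * d} = {..<n*d} \<union> {n*d..<n*d+d}" by auto
  moreover have "sum g {n*d..<n*d+d} = (\<Sum>s<d. g (n*d+s))"
    using sum.shift_bounds_nat_ivl[of g 0 "n*d" d] by (simp add: atLeast0LessThan add.commute)
  moreover have "sum g ({..<n*d} \<union> {n*d..<n*d+d}) = sum g {..<n*d} + sum g {n*d..<n*d+d}"
    by (rule sum.union_disjoint) auto
  ultimately show ?case using Suc by simp
qed

definition FF :: "nat \<Rightarrow> nat \<Rightarrow> (int \<Rightarrow> complex mat) \<Rightarrow> (int \<Rightarrow> complex mat) \<Rightarrow> nat \<Rightarrow> nat \<Rightarrow> nat \<Rightarrow> nat \<Rightarrow> complex" where
  "FF n d T U a b x y = (\<Sum>r<n. \<Sum>s<d. T (int a - int r) $$ (x,s) * U (int r - int b) $$ (s,y))"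

lemma prod_entry:
  assumes "i < n*d" "k < n*d" "d \<ge> 1"
  shows "(block_toeplitz n d T * block_toeplitz n d U) $$ (i,k) = FF n d T U (i div d) (k div d) (i mod d) (k mod d)"
proof -
  have "(block_toeplitz n d T * block_toeplitz n d U) $$ (i,k) =
     (\<Sum>l<n*d. block_toeplitz n d T $$ (i,l) * block_toeplitz n d U $$ (l,k))"
    using assms unfolding block_toeplitz_def
    by (simp add: scalar_prod_def atLeast0LessThan)
  also have "\<dots> = (\<Sum>r<n. \<Sum>s<d. block_toeplitz n d T $$ (i,r*d+s) * block_toeplitz n d U $$ (r*d+s,k))"
    by (rule sum_split_nd)
  also have "\<dots> = FF n d T U (i div d) (k div d) (i mod d) (k mod d)"
    unfolding FF_def
  proof (rule sum.cong[OF refl], rule sum.cong[OF refl])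
    fix r s assume r: "r \<in> {..<n}" and s: "s \<in> {..<d}"
    have l: "r*d+s < n*d"
    proof -
      have "r*d+s < r*d + d" using s by simp
      also have "\<dots> = Suc r * d" by simp
      also have "\<dots> \<le> n*d" using r by (intro mult_right_mono) auto
      finally show ?thesis .
    qed
    have dv: "(r*d+s) div d = r" "(r*d+s) mod d = s" using s by auto
    show "block_toeplitz n d T $$ (i,r*d+s) * block_toeplitz n d U $$ (r*d+s,k) =
      T (int (i div d) - int r) $$ (i mod d, s) * U (int r - int (k div d)) $$ (s, k mod d)"
      using assms l dv unfolding block_toeplitz_def by simp
  qed
  finally show ?thesis .
qed

definition HH where
  "HH d T U a b x y (r::int) = (\<Sum>s<d. T (int a - r) $$ (x,s) * U (r - int b) $$ (s,y))"

lemma FF_shift: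
  assumes "n \<ge> 1"
  shows "FF n d T U (Suc a) (Suc b) x y - FF n d T U a b x y =
     HH d T U a b x y (-1) - HH d T U a b x y (int n - 1)"
proof -
  obtain m where n: "n = Suc m" using assms by (cases n) auto
  have A: "FF n d T U (Suc a) (Suc b) x y = (\<Sum>r<n. HH d T U a b x y (int r - 1))"
    unfolding FF_def HH_def by (intro sum.cong refl) (simp add: algebra_simps)
  have B: "FF n d T U a b x y = (\<Sum>r<n. HH d T U a b x y (int r))"
    unfolding FF_def HH_def by simp
  have A2: "(\<Sum>r<n. HH d T U a b x y (int r - 1)) = HH d T U a b x y (-1) + (\<Sum>r<m. HH d T U a b x y (int r))"
    unfolding n sum.lessThan_Suc_shift by simp
  have B2: "(\<Sum>r<n. HH d T U a b x y (int r)) = (\<Sum>r<m. HH d T U a b x y (int r)) + HH d T U a b x y (int n - 1)"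
    unfolding n by simp
  show ?thesis using A B A2 B2 by simp
qed

lemma HH_eq_mult:
  assumes "x < d" "y < d" "A \<in> carrier_mat d d" "B \<in> carrier_mat d d"
  shows "(\<Sum>s<d. A $$ (x,s) * B $$ (s,y)) = (A * B) $$ (x,y)"
  using assms by (simp add: scalar_prod_def atLeast0LessThan)

theorem lemma3p1:
  fixes n d :: nat and T U :: "int \<Rightarrow> complex mat"
  assumes "n \<ge> 2" and "d \<ge> 1"
    and "\<And>j. \<bar>j\<bar> \<le> int n - 1 \<Longrightarrow> T j \<in> carrier_mat d d"
    and "\<And>j. \<bar>j\<bar> \<le> int n - 1 \<Longrightarrow> U j \<in> carrier_mat d d"
  shows "is_block_toeplitz n d (block_toeplitz n d T * block_toeplitz n d U) \<longleftrightarrow>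
    (\<forall>p \<in> {1..int n - 1}. \<forall>q \<in> {1..int n - 1}.
       T p * U (q - int n) = T (p - int n) * U q)"
proof -
  let ?M = "block_toeplitz n d T * block_toeplitz n d U"
  let ?F = "FF n d T U"
  have bc: "block_toeplitz n d X \<in> carrier_mat (n*d) (n*d)" for X by (simp add: block_toeplitz_def)
  have Mc: "?M \<in> carrier_mat (n*d) (n*d)" using mult_carrier_mat[OF bc bc] .
  have idx: "i div d < n" if "i < n*d" for i
    using that assms(2) by (simp add: less_mult_imp_div_less)
  have recomp: "(a*d + x) div d = a" "(a*d+x) mod d = x" "a*d + x < n*d" if "a < n" "x < d" for a x
  proof -
    show "(a*d + x) div d = a" "(a*d+x) mod d = x" using that by auto
    have "a*d+x < a*d + d" using that by simp
    also have "\<dots> = Suc a * d" by simp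
    also have "\<dots> \<le> n*d" using that by (intro mult_right_mono) auto
    finally show "a*d + x < n*d" .
  qed
  have Fent: "?M $$ (a*d+x, b*d+y) = ?F a b x y" if "a < n" "b < n" "x < d" "y < d" for a b x y
    using prod_entry[OF recomp(3)[OF that(1,3)] recomp(3)[OF that(2,4)] assms(2)] recomp that by simp
  have key: "?F (Suc a) (Suc b) x y - ?F a b x y =
      (T (int a + 1) * U (int (n - Suc b) - int n)) $$ (x,y) - (T (int a + 1 - int n) * U (int (n - Suc b))) $$ (x,y)"
    if "Suc a < n" "Suc b < n" "x < d" "y < d" for a b x y
  proof -
    have e1: "HH d T U a b x y (-1) = (T (int a + 1) * U (int (n - Suc b) - int n)) $$ (x,y)"
    proof -
      have "HH d T U a b x y (-1) = (\<Sum>s<d. T (int a + 1) $$ (x,s) * U (int (n - Suc b) - int n) $$ (s,y))"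
        unfolding HH_def using that by (simp add: of_nat_diff)
      also have "\<dots> = (T (int a + 1) * U (int (n - Suc b) - int n)) $$ (x,y)"
        by (rule HH_eq_mult) (use that in \<open>auto intro: assms(3,4)\<close>)
      finally show ?thesis .
    qed
    have e2: "HH d T U a b x y (int n - 1) = (T (int a + 1 - int n) * U (int (n - Suc b))) $$ (x,y)"
    proof -
      have "HH d T U a b x y (int n - 1) = (\<Sum>s<d. T (int a + 1 - int n) $$ (x,s) * U (int (n - Suc b)) $$ (s,y))"
        unfolding HH_def using that by (simp add: of_nat_diff algebra_simps)
      also have "\<dots> = (T (int a + 1 - int n) * U (int (n - Suc b))) $$ (x,y)"
        by (rule HH_eq_mult) (use that in \<open>auto intro: assms(3,4)\<close>)
      finally show ?thesis .
    qed
    show ?thesis using FF_shift[of n d T U a b x y] assms(1) e1 e2 by simp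
  qed
  have dimP: "T p * U q \<in> carrier_mat d d" if "\<bar>p\<bar> \<le> int n - 1" "\<bar>q\<bar> \<le> int n - 1" for p q
    by (rule mult_carrier_mat[OF assms(3)[OF that(1)] assms(4)[OF that(2)]])
  show ?thesis
  proof
    assume "is_block_toeplitz n d ?M"
    then obtain S where S: "?M = block_toeplitz n d S" unfolding is_block_toeplitz_def by auto
    have SE: "?M $$ (i,k) = S (int(i div d) - int(k div d)) $$ (i mod d, k mod d)" if "i<n*d" "k<n*d" for i k
    proof -
      have "?M $$ (i,k) = block_toeplitz n d S $$ (i,k)" using S by simp
      also have "\<dots> = S (int(i div d) - int(k div d)) $$ (i mod d, k mod d)"
        unfolding block_toeplitz_def using that by simp
      finally show ?thesis .
    qed
    have shift: "?F (Suc a) (Suc b) x y = ?F a b x y" if "Suc a < n" "Suc b < n" "x < d" "y < d" for a b x y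
    proof -
      have "?F (Suc a) (Suc b) x y = ?M $$ (Suc a*d+x, Suc b*d+y)" using Fent[of "Suc a" "Suc b" x y] that by auto
      also have "\<dots> = S (int (Suc a) - int (Suc b)) $$ (x,y)"
        using SE[OF recomp(3)[of "Suc a" x] recomp(3)[of "Suc b" y]] recomp[of "Suc a" x] recomp[of "Suc b" y] that by simp
      also have "\<dots> = ?M $$ (a*d+x, b*d+y)"
        using SE[OF recomp(3)[of a x] recomp(3)[of b y]] recomp[of a x] recomp[of b y] that by simp
      also have "\<dots> = ?F a b x y" using Fent[of a b x y] that by auto
      finally show ?thesis .
    qed
    show "\<forall>p \<in> {1..int n - 1}. \<forall>q \<in> {1..int n - 1}. T p * U (q - int n) = T (p - int n) * U q"
    proof (intro ballI)
      fix p q assume p: "p \<in> {1..int n - 1}" and q: "q \<in> {1..int n - 1}"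
      define a where "a = nat (p - 1)"
      define b where "b = n - 1 - nat q"
      have pa: "p = int a + 1" and ab: "Suc a < n" "Suc b < n" and qb: "q = int (n - Suc b)"
        using p q unfolding a_def b_def by auto
      have pq1: "\<bar>p\<bar> \<le> int n - 1" "\<bar>q\<bar> \<le> int n - 1" "\<bar>p - int n\<bar> \<le> int n - 1" "\<bar>q - int n\<bar> \<le> int n - 1"
        using p q by auto
      have c1: "T p * U (q - int n) \<in> carrier_mat d d" by (rule dimP[OF pq1(1) pq1(4)])
      have c2: "T (p - int n) * U q \<in> carrier_mat d d" by (rule dimP[OF pq1(3) pq1(2)])
      show "T p * U (q - int n) = T (p - int n) * U q"
      proof (rule eq_matI)
        fix x y assume x: "x < dim_row (T (p - int n) * U q)" and y: "y < dim_col (T (p - int n) * U q)"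
        have "dim_row (T (p - int n) * U q) = d" "dim_col (T (p - int n) * U q) = d"
          using c2 by auto
        then have xy: "x < d" "y < d" using x y by auto
        show "(T p * U (q - int n)) $$ (x,y) = (T (p - int n) * U q) $$ (x,y)"
        proof -
          let ?X = "(T (int a + 1) * U (int (n - Suc b) - int n)) $$ (x,y)"
          let ?Y = "(T (int a + 1 - int n) * U (int (n - Suc b))) $$ (x,y)"
          have "?X - ?Y = ?F (Suc a) (Suc b) x y - ?F a b x y" using key[OF ab xy] by (rule sym)
          also have "\<dots> = 0" unfolding shift[OF ab xy] by (rule diff_self)
          finally have "?X = ?Y" by (rule right_minus_eq[THEN iffD1])
          then show ?thesis unfolding pa qb .
        qed
      qed (use carrier_matD[OF c1] carrier_matD[OF c2] in simp_all)
    qed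
  next
    assume C: "\<forall>p \<in> {1..int n - 1}. \<forall>q \<in> {1..int n - 1}. T p * U (q - int n) = T (p - int n) * U q"
    have shift: "?F (Suc a) (Suc b) x y = ?F a b x y" if "Suc a < n" "Suc b < n" "x < d" "y < d" for a b x y
    proof -
      have eq: "T (int a + 1) * U (int (n - Suc b) - int n) = T (int a + 1 - int n) * U (int (n - Suc b))"
        by (rule C[rule_format]) (use that in auto)
      have "?F (Suc a) (Suc b) x y - ?F a b x y = (T (int a + 1 - int n) * U (int (n - Suc b))) $$ (x,y) - (T (int a + 1 - int n) * U (int (n - Suc b))) $$ (x,y)"
        using key[OF that] unfolding eq .
      also have "\<dots> = 0" by (rule diff_self)
      finally show ?thesis by (rule right_minus_eq[THEN iffD1])
    qed
    have shiftm: "?F (a + m) (b + m) x y = ?F a b x y" if "a + m < n" "b + m < n" "x < d" "y < d" for a b m x y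
      using that
    proof (induction m)
      case 0 then show ?case by simp
    next
      case (Suc m)
      then have "?F (Suc (a + m)) (Suc (b + m)) x y = ?F (a+m) (b+m) x y" by (intro shift) auto
      then show ?case using Suc by simp
    qed
    define S where "S j = mat d d (\<lambda>(x,y). if j \<ge> 0 then ?F (nat j) 0 x y else ?F 0 (nat (-j)) x y)" for j
    have Sd: "S j \<in> carrier_mat d d" for j unfolding S_def by simp
    have "?M = block_toeplitz n d S"
    proof (rule eq_matI)
      fix i k assume i: "i < dim_row (block_toeplitz n d S)" and k: "k < dim_col (block_toeplitz n d S)"
      then have ik: "i < n*d" "k < n*d" unfolding block_toeplitz_def by auto
      define a where "a = i div d"
      define b where "b = k div d"
      define x where "x = i mod d"
      define y where "y = k mod d"
      have ab: "a < n" "b < n" using idx ik unfolding a_def b_def by auto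
      have xy: "x < d" "y < d" using assms(2) unfolding x_def y_def by auto
      have "?M $$ (i,k) = ?F a b x y" using prod_entry[OF ik assms(2)] unfolding a_def b_def x_def y_def by simp
      also have "\<dots> = S (int a - int b) $$ (x,y)"
      proof (cases "b \<le> a")
        case True
        then have "?F a b x y = ?F (a - b) 0 x y"
          using shiftm[of "a-b" b 0 x y] ab xy by simp
        then show ?thesis using True xy unfolding S_def by (simp add: nat_diff_distrib of_nat_diff)
      next
        case False
        then have "?F a b x y = ?F 0 (b - a) x y"
          using shiftm[of 0 a "b-a" x y] ab xy by simp
        moreover have "nat (int b - int a) = b - a" by simp
        ultimately show ?thesis using False xy unfolding S_def by simp
      qed
      also have "\<dots> = block_toeplitz n d S $$ (i,k)"
        using ik unfolding block_toeplitz_def a_def b_def x_def y_def by simp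
      finally show "?M $$ (i,k) = block_toeplitz n d S $$ (i,k)" .
    qed (auto simp: block_toeplitz_def)
    then show "is_block_toeplitz n d ?M" unfolding is_block_toeplitz_def using Mc Sd by blast
  qed
qed

end
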